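(* Let $n\ge 1$, let $\Omega\subset\mathbb{R}^n$ be a domain, and let $\boldsymbol{\alpha}:\mathbb{R}^n\times\mathbb{R}^n\to\mathbb{R}^n$ be a nonlocal weight function satisfying $\boldsymbol{\alpha}(\mathbf{x},\mathbf{x}')=-\boldsymbol{\alpha}(\mathbf{x}',\mathbf{x})$ for all $\mathbf{x},\mathbf{x}'$. Define the interaction (volume-constrained boundary) region $$\Omega_\tau=\{\mathbf{x}'\in\mathbb{R}^n\setminus\Omega \;:\; \exists\,\mathbf{x}\in\Omega \text{ with } \boldsymbol{\alpha}(\mathbf{x},\mathbf{x}')\neq\mathbf{0}\}.$$ Let $\boldsymbol{\Theta}(\mathbf{x},\mathbf{x}')$ be a fourth-order tensor field on $(\Omega\cup\Omega_\tau)\times(\Omega\cup\Omega_\tau)$ with components satisfying $\Theta_{ijkl}=\Theta_{jikl}=\Theta_{ijlk}=\Theta_{klij}$ and $\boldsymbol{\Theta}(\mathbf{x},\mathbf{x}')=\boldsymbol{\Theta}(\mathbf{x}',\mathbf{x})$. For vector fields $\mathbf{w}$ on $\Omega\cup\Omega_\tau$ and second-order tensor fields $\boldsymbol{\Psi}(\mathbf{x},\mathbf{x}')$ on $(\Omega\cup\Omega_\tau)^2$ define $$\mathcal{D}^*(\mathbf{w})(\mathbf{x},\mathbf{x}')=-[\mathbf{w}(\mathbf{x}')-\mathbf{w}(\mathbf{x})]\otimes\boldsymbol{\alpha}(\mathbf{x},\mathbf{x}'),$$ $$\mathcal{D}(\boldsymbol{\Psi})(\mathbf{x})=\int_{\Omega\cup\Omega_\tau}[\boldsymbol{\Psi}(\mathbf{x},\mathbf{x}')+\boldsymbol{\Psi}(\mathbf{x}',\mathbf{x})]\cdot\boldsymbol{\alpha}(\mathbf{x},\mathbf{x}')\,dV_{\mathbf{x}'}\quad(\mathbf{x}\in\Omega),$$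 $$\mathcal{N}(\boldsymbol{\Psi})(\mathbf{x})=-\int_{\Omega\cup\Omega_\tau}[\boldsymbol{\Psi}(\mathbf{x},\mathbf{x}')+\boldsymbol{\Psi}(\mathbf{x}',\mathbf{x})]\cdot\boldsymbol{\alpha}(\mathbf{x},\mathbf{x}')\,dV_{\mathbf{x}'}\quad(\mathbf{x}\in\Omega_\tau),$$ where $(\boldsymbol{\Theta}:\mathbf{A})_{ij}=\Theta_{ijkl}A_{kl}$ and $(\boldsymbol{\Psi}\cdot\boldsymbol{\alpha})_i=\Psi_{ij}\alpha_j$. Then for any two vector fields $\mathbf{v}_1,\mathbf{v}_2$ on $\Omega\cup\Omega_\tau$ for which all the integrals involved converge absolutely, $$\int_{\Omega}\Big[\mathbf{v}_1(\mathbf{x})\cdot\mathcal{D}\big(\boldsymbol{\Theta}:\mathcal{D}^*(\mathbf{v}_2)\big)(\mathbf{x})-\mathbf{v}_2(\mathbf{x})\cdot\mathcal{D}\big(\boldsymbol{\Theta}:\mathcal{D}^*(\mathbf{v}_1)\big)(\mathbf{x})\Big]dV_{\mathbf{x}}$$ $$=\int_{\Omega_\tau}\Big[\mathbf{v}_1(\mathbf{x})\cdot\mathcal{N}\big(\boldsymbol{\Theta}:\mathcal{D}^*(\mathbf{v}_2)\big)(\mathbf{x})-\mathbf{v}_2(\mathbf{x})\cdot\mathcal{N}\big(\boldsymbol{\Theta}:\mathcal{D}^*(\mathbf{v}_1)\big)(\mathbf{x})\Big]dV_{\mathbf{x}}.$$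
   Context: This is the nonlocal (peridynamic) reciprocal theorem for linear elasticity, formulated with the nonlocal divergence operator $\mathcal{D}$, its adjoint-type operator $\mathcal{D}^*$, and the nonlocal interaction (traction) operator $\mathcal{N}$. Since $\boldsymbol{\alpha}(\mathbf{x},\mathbf{x}')\ne\mathbf{0}$ with $\mathbf{x}\in\Omega$ forces $\mathbf{x}'\in\Omega\cup\Omega_\tau$, integrating over $\Omega\cup\Omega_\tau$ in $\mathcal{D}$ is the same as integrating over $\mathbb{R}^n$. Note $\Omega\cap\Omega_\tau=\emptyset$. *)

theory Defs
  imports "HOL-Analysis.Analysis"
begin

text \<open>Points of R^n are of type real^'n; second-order tensor fields on pairs of
points are functions x x' i j; the fourth-order field Theta is x x' i j k l.\<close>

definition interaction_region ::
  "(real^'n) set \<Rightarrow> (real^'n \<Rightarrow> real^'n \<Rightarrow> real^'n) \<Rightarrow> (real^'n) set" where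
  "interaction_region \<Omega> \<alpha> = {x'. x' \<notin> \<Omega> \<and> (\<exists>x\<in>\<Omega>. \<alpha> x x' \<noteq> 0)}"

definition Dstar ::
  "(real^'n \<Rightarrow> real^'n) \<Rightarrow> (real^'n \<Rightarrow> real^'n \<Rightarrow> real^'n)
   \<Rightarrow> real^'n \<Rightarrow> real^'n \<Rightarrow> 'n \<Rightarrow> 'n \<Rightarrow> real" where
  "Dstar w \<alpha> x x' i j = - ((w x' $ i - w x $ i) * (\<alpha> x x' $ j))"

definition ddot ::
  "(real^'n \<Rightarrow> real^'n \<Rightarrow> 'n \<Rightarrow> 'n \<Rightarrow> 'n \<Rightarrow> 'n \<Rightarrow> real)
   \<Rightarrow> (real^'n \<Rightarrow> real^'n \<Rightarrow> 'n \<Rightarrow> 'n \<Rightarrow> real)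
   \<Rightarrow> real^'n \<Rightarrow> real^'n \<Rightarrow> 'n \<Rightarrow> 'n \<Rightarrow> real" where
  "ddot \<Theta> A x x' i j = (\<Sum>k\<in>UNIV. \<Sum>l\<in>UNIV. \<Theta> x x' i j k l * A x x' k l)"

definition sym_dot ::
  "(real^'n \<Rightarrow> real^'n \<Rightarrow> real^'n) \<Rightarrow> (real^'n \<Rightarrow> real^'n \<Rightarrow> 'n \<Rightarrow> 'n \<Rightarrow> real)
   \<Rightarrow> real^'n \<Rightarrow> real^'n \<Rightarrow> 'n \<Rightarrow> real" where
  "sym_dot \<alpha> \<Psi> x x' i = (\<Sum>j\<in>UNIV. (\<Psi> x x' i j + \<Psi> x' x i j) * (\<alpha> x x' $ j))"

text \<open>Nonlocal divergence D (meaningful for x in Omega), U = Omega union Omega_tau\<close>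
definition Dop ::
  "(real^'n) set \<Rightarrow> (real^'n \<Rightarrow> real^'n \<Rightarrow> real^'n)
   \<Rightarrow> (real^'n \<Rightarrow> real^'n \<Rightarrow> 'n \<Rightarrow> 'n \<Rightarrow> real) \<Rightarrow> real^'n \<Rightarrow> real^'n" where
  "Dop U \<alpha> \<Psi> x = (\<chi> i. LINT x':U|lborel. sym_dot \<alpha> \<Psi> x x' i)"

text \<open>Nonlocal interaction operator N (meaningful for x in Omega_tau)\<close>
definition Nop ::
  "(real^'n) set \<Rightarrow> (real^'n \<Rightarrow> real^'n \<Rightarrow> real^'n)
   \<Rightarrow> (real^'n \<Rightarrow> real^'n \<Rightarrow> 'n \<Rightarrow> 'n \<Rightarrow> real) \<Rightarrow> real^'n \<Rightarrow> real^'n" where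
  "Nop U \<alpha> \<Psi> x = (\<chi> i. - (LINT x':U|lborel. sym_dot \<alpha> \<Psi> x x' i))"

end

theory Submission
  imports Defs
begin

lemma psi_swap:
  fixes \<Theta> :: "real^'n \<Rightarrow> real^'n \<Rightarrow> 'n \<Rightarrow> 'n \<Rightarrow> 'n \<Rightarrow> 'n \<Rightarrow> real"
  assumes "\<Theta> y x = \<Theta> x y" "\<alpha> y x = - \<alpha> x y"
  shows "ddot \<Theta> (Dstar w \<alpha>) y x i j = ddot \<Theta> (Dstar w \<alpha>) x y i j"
  unfolding ddot_def Dstar_def using assms by (simp add: algebra_simps)

definition Mm :: "('n \<Rightarrow> 'n \<Rightarrow> 'n \<Rightarrow> 'n \<Rightarrow> real) \<Rightarrow> real^'n \<Rightarrow> 'n \<Rightarrow> 'n \<Rightarrow> real" where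
  "Mm T a i k = (\<Sum>j\<in>UNIV. \<Sum>l\<in>UNIV. T i j k l * a$j * a$l)"

lemma Mm_sym:
  assumes "\<And>i j k l. T i j k l = T k l i j"
  shows "Mm T a i k = Mm T a k i"
  unfolding Mm_def
  apply (subst sum.swap)
  apply (intro sum.cong refl)
  using assms by (simp add: algebra_simps)

lemma main_expand:
  fixes \<Theta> :: "real^'n \<Rightarrow> real^'n \<Rightarrow> 'n \<Rightarrow> 'n \<Rightarrow> 'n \<Rightarrow> 'n \<Rightarrow> real"
  shows "(\<Sum>i\<in>UNIV. p$i * (\<Sum>j\<in>UNIV. ddot \<Theta> (Dstar w \<alpha>) x y i j * (\<alpha> x y $ j)))
     = - (\<Sum>i\<in>UNIV. \<Sum>k\<in>UNIV. p$i * (w y $ k - w x $ k) * Mm (\<Theta> x y) (\<alpha> x y) i k)"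
proof -
  have "(\<Sum>i\<in>UNIV. p$i * (\<Sum>j\<in>UNIV. ddot \<Theta> (Dstar w \<alpha>) x y i j * (\<alpha> x y $ j)))
     = - (\<Sum>i\<in>UNIV. \<Sum>j\<in>UNIV. \<Sum>k\<in>UNIV. \<Sum>l\<in>UNIV. p$i * (w y $ k - w x $ k) * (\<Theta> x y i j k l * \<alpha> x y $ j * \<alpha> x y $ l))"
    unfolding ddot_def Dstar_def
    apply (simp only: sum_distrib_left sum_distrib_right sum_negf[symmetric])
    apply (intro sum.cong refl)
    by (simp add: algebra_simps)
  also have "\<dots> = - (\<Sum>i\<in>UNIV. \<Sum>k\<in>UNIV. \<Sum>j\<in>UNIV. \<Sum>l\<in>UNIV. p$i * (w y $ k - w x $ k) * (\<Theta> x y i j k l * \<alpha> x y $ j * \<alpha> x y $ l))"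
    by (intro arg_cong[where f=uminus] sum.cong refl sum.swap)
  also have "\<dots> = - (\<Sum>i\<in>UNIV. \<Sum>k\<in>UNIV. p$i * (w y $ k - w x $ k) * Mm (\<Theta> x y) (\<alpha> x y) i k)"
    unfolding Mm_def by (simp only: sum_distrib_left)
  finally show ?thesis .
qed

lemma Mm_neg: "Mm T (- a) = Mm T a"
  unfolding Mm_def by (intro ext) simp

lemma comb_zero:
  fixes M :: "'n::finite \<Rightarrow> 'n \<Rightarrow> real" and p1 q1 p2 q2 :: "real^'n"
  assumes sym: "\<And>i k. M i k = M k i"
  shows "(- 2 * (\<Sum>i\<in>UNIV. \<Sum>k\<in>UNIV. p1$i * (q2$k - p2$k) * M i k))
       + (- 2 * (\<Sum>i\<in>UNIV. \<Sum>k\<in>UNIV. q1$i * (p2$k - q2$k) * M i k))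
       - (- 2 * (\<Sum>i\<in>UNIV. \<Sum>k\<in>UNIV. p2$i * (q1$k - p1$k) * M i k))
       - (- 2 * (\<Sum>i\<in>UNIV. \<Sum>k\<in>UNIV. q2$i * (p1$k - q1$k) * M i k)) = 0"
proof -
  have sw: "(\<Sum>i\<in>UNIV. \<Sum>k\<in>UNIV. (q1$i - p1$i) * (q2$k - p2$k) * M i k)
          = (\<Sum>i\<in>UNIV. \<Sum>k\<in>UNIV. (q2$i - p2$i) * (q1$k - p1$k) * M i k)"
    apply (subst sum.swap)
    apply (intro sum.cong refl)
    using sym by (simp add: algebra_simps)
  have "?thesis \<longleftrightarrow> 2 * (\<Sum>i\<in>UNIV. \<Sum>k\<in>UNIV. (q1$i - p1$i) * (q2$k - p2$k) * M i k)
          - 2 * (\<Sum>i\<in>UNIV. \<Sum>k\<in>UNIV. (q2$i - p2$i) * (q1$k - p1$k) * M i k) = 0"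
  proof -
    have "(- 2 * (\<Sum>i\<in>UNIV. \<Sum>k\<in>UNIV. p1$i * (q2$k - p2$k) * M i k))
       + (- 2 * (\<Sum>i\<in>UNIV. \<Sum>k\<in>UNIV. q1$i * (p2$k - q2$k) * M i k))
       - (- 2 * (\<Sum>i\<in>UNIV. \<Sum>k\<in>UNIV. p2$i * (q1$k - p1$k) * M i k))
       - (- 2 * (\<Sum>i\<in>UNIV. \<Sum>k\<in>UNIV. q2$i * (p1$k - q1$k) * M i k))
      = (\<Sum>i\<in>UNIV. \<Sum>k\<in>UNIV. - 2 * (p1$i * (q2$k - p2$k) * M i k) + - 2 * (q1$i * (p2$k - q2$k) * M i k)
          - - 2 * (p2$i * (q1$k - p1$k) * M i k) - - 2 * (q2$i * (p1$k - q1$k) * M i k))"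
      by (simp only: sum_distrib_left sum_subtractf sum.distrib)
    also have "\<dots> = (\<Sum>i\<in>UNIV. \<Sum>k\<in>UNIV. 2 * ((q1$i - p1$i) * (q2$k - p2$k) * M i k)
          - 2 * ((q2$i - p2$i) * (q1$k - p1$k) * M i k))"
      by (intro sum.cong refl) (simp add: algebra_simps)
    also have "\<dots> = 2 * (\<Sum>i\<in>UNIV. \<Sum>k\<in>UNIV. (q1$i - p1$i) * (q2$k - p2$k) * M i k)
          - 2 * (\<Sum>i\<in>UNIV. \<Sum>k\<in>UNIV. (q2$i - p2$i) * (q1$k - p1$k) * M i k)"
      by (simp only: sum_distrib_left sum_subtractf)
    finally show ?thesis by simp
  qed
  then show ?thesis using sw by simp
qed

lemma sd_eq:
  fixes \<Theta> :: "real^'n \<Rightarrow> real^'n \<Rightarrow> 'n \<Rightarrow> 'n \<Rightarrow> 'n \<Rightarrow> 'n \<Rightarrow> real"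
  assumes "\<Theta> y x = \<Theta> x y" "\<alpha> y x = - \<alpha> x y"
  shows "(\<Sum>i\<in>UNIV. p$i * sym_dot \<alpha> (ddot \<Theta> (Dstar w \<alpha>)) x y i)
     = 2 * (\<Sum>i\<in>UNIV. p$i * (\<Sum>j\<in>UNIV. ddot \<Theta> (Dstar w \<alpha>) x y i j * (\<alpha> x y $ j)))"
  unfolding sym_dot_def psi_swap[where \<Theta>=\<Theta> and \<alpha>=\<alpha> and x=x and y=y, OF assms]
  by (simp add: sum_distrib_left algebra_simps)

lemma pointwise:
  fixes \<Theta> :: "real^'n \<Rightarrow> real^'n \<Rightarrow> 'n \<Rightarrow> 'n \<Rightarrow> 'n \<Rightarrow> 'n \<Rightarrow> real"
  assumes a1: "\<alpha> y x = - \<alpha> x y" and a2: "\<alpha> x y = - \<alpha> y x"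
    and t1: "\<Theta> y x = \<Theta> x y" and t2: "\<And>i j k l. \<Theta> x y i j k l = \<Theta> x y k l i j"
  shows "(\<Sum>i\<in>UNIV. v1 x $ i * sym_dot \<alpha> (ddot \<Theta> (Dstar v2 \<alpha>)) x y i
                   - v2 x $ i * sym_dot \<alpha> (ddot \<Theta> (Dstar v1 \<alpha>)) x y i)
       + (\<Sum>i\<in>UNIV. v1 y $ i * sym_dot \<alpha> (ddot \<Theta> (Dstar v2 \<alpha>)) y x i
                   - v2 y $ i * sym_dot \<alpha> (ddot \<Theta> (Dstar v1 \<alpha>)) y x i) = 0"
proof -
  have m: "Mm (\<Theta> y x) (\<alpha> y x) = Mm (\<Theta> x y) (\<alpha> x y)"
    using t1 a1 Mm_neg by metis
  have ms: "\<And>i k. Mm (\<Theta> x y) (\<alpha> x y) i k = Mm (\<Theta> x y) (\<alpha> x y) k i"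
    by (rule Mm_sym) (rule t2)
  show ?thesis
    unfolding sum_subtractf sd_eq[where \<Theta>=\<Theta> and \<alpha>=\<alpha> and x=x and y=y, OF t1 a1] sd_eq[where \<Theta>=\<Theta> and \<alpha>=\<alpha> and x=y and y=x, OF t1[symmetric] a2] main_expand m
    using comb_zero[of "Mm (\<Theta> x y) (\<alpha> x y)" "v1 x" "v2 y" "v2 x" "v1 y", OF ms]
    by (simp add: algebra_simps)
qed

lemma fub:
  fixes f :: "real^'n \<Rightarrow> real^'n \<Rightarrow> real"
  assumes "set_integrable (lborel \<Otimes>\<^sub>M lborel) (S \<times> U) (\<lambda>(x,y). f x y)"
  shows "set_integrable lborel S (\<lambda>x. LINT y:U|lborel. f x y)"
    and "(LINT x:S|lborel. LINT y:U|lborel. f x y)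
         = set_lebesgue_integral (lborel \<Otimes>\<^sub>M lborel) (S \<times> U) (\<lambda>(x,y). f x y)"
proof -
  let ?g = "\<lambda>z. indicator (S \<times> U) z *\<^sub>R (case z of (x,y) \<Rightarrow> f x y)"
  have gi: "integrable (lborel \<Otimes>\<^sub>M lborel) ?g"
    using assms unfolding set_integrable_def .
  have e: "\<And>x. (\<integral>y. ?g (x,y) \<partial>lborel) = indicator S x *\<^sub>R (LINT y:U|lborel. f x y)"
    unfolding set_lebesgue_integral_def
    by (simp add: indicator_times mult.assoc)
  show "set_integrable lborel S (\<lambda>x. LINT y:U|lborel. f x y)"
    using lborel_pair.integrable_fst'[OF gi] unfolding e set_integrable_def .
  show "(LINT x:S|lborel. LINT y:U|lborel. f x y)
         = set_lebesgue_integral (lborel \<Otimes>\<^sub>M lborel) (S \<times> U) (\<lambda>(x,y). f x y)"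
    using lborel_pair.integral_fst'[OF gi] unfolding e set_lebesgue_integral_def by simp
qed

lemma set_sum_int:
  fixes f :: "'i \<Rightarrow> 'a \<Rightarrow> real"
  assumes "finite I" "\<And>i. i \<in> I \<Longrightarrow> set_integrable M A (f i)"
  shows "set_integrable M A (\<lambda>x. \<Sum>i\<in>I. f i x)"
    and "(LINT x:A|M. (\<Sum>i\<in>I. f i x)) = (\<Sum>i\<in>I. LINT x:A|M. f i x)"
proof -
  have i: "\<And>i. i \<in> I \<Longrightarrow> integrable M (\<lambda>x. indicator A x * f i x)"
    using assms(2) unfolding set_integrable_def by simp
  have e: "\<And>x. indicator A x *\<^sub>R (\<Sum>i\<in>I. f i x) = (\<Sum>i\<in>I. indicator A x * f i x)"
    by (simp add: sum_distrib_left)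
  show "set_integrable M A (\<lambda>x. \<Sum>i\<in>I. f i x)"
    unfolding set_integrable_def e using i by (rule Bochner_Integration.integrable_sum)
  show "(LINT x:A|M. (\<Sum>i\<in>I. f i x)) = (\<Sum>i\<in>I. LINT x:A|M. f i x)"
    unfolding set_lebesgue_integral_def e
    using Bochner_Integration.integral_sum[OF i] by simp
qed

lemma un_int:
  fixes f :: "'a \<Rightarrow> real"
  assumes "A \<inter> B = {}" "set_integrable M A f" "set_integrable M B f"
  shows "set_integrable M (A \<union> B) f"
proof -
  have "integrable M (\<lambda>x. indicator A x *\<^sub>R f x + indicator B x *\<^sub>R f x)"
    using assms(2,3) unfolding set_integrable_def by (rule Bochner_Integration.integrable_add)
  moreover have "(\<lambda>x. indicator (A \<union> B) x *\<^sub>R f x) = (\<lambda>x. indicator A x *\<^sub>R f x + indicator B x *\<^sub>R f x)"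
    using assms(1) by (auto simp: fun_eq_iff split: split_indicator)
  ultimately show ?thesis unfolding set_integrable_def by simp
qed

lemma zero_swap:
  fixes f :: "(real^'n) \<times> (real^'n) \<Rightarrow> real"
  assumes fi: "set_integrable (lborel \<Otimes>\<^sub>M lborel) (U \<times> U) f"
    and anti: "\<And>x y. x \<in> U \<Longrightarrow> y \<in> U \<Longrightarrow> f (x,y) + f (y,x) = 0"
  shows "set_lebesgue_integral (lborel \<Otimes>\<^sub>M lborel) (U \<times> U) f = 0"
proof -
  let ?g = "\<lambda>z. indicator (U \<times> U) z *\<^sub>R f z"
  have gi: "integrable (lborel \<Otimes>\<^sub>M lborel) ?g"
    using fi unfolding set_integrable_def .
  have gm: "?g \<in> borel_measurable (lborel \<Otimes>\<^sub>M lborel)"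
    using gi by (rule borel_measurable_integrable)
  have sw: "(\<integral>(x,y). ?g (y,x) \<partial>(lborel \<Otimes>\<^sub>M lborel)) = integral\<^sup>L (lborel \<Otimes>\<^sub>M lborel) ?g"
    by (rule lborel_pair.integral_product_swap[OF gm])
  have pt: "(\<lambda>(x,y). ?g (y,x)) = (\<lambda>z. - ?g z)"
  proof (intro ext, clarify)
    fix x y
    show "?g (y,x) = - ?g (x,y)"
      using anti[of x y] by (auto split: split_indicator simp: algebra_simps)
  qed
  have "integral\<^sup>L (lborel \<Otimes>\<^sub>M lborel) ?g = - integral\<^sup>L (lborel \<Otimes>\<^sub>M lborel) ?g"
    using sw unfolding pt by simp
  then show ?thesis unfolding set_lebesgue_integral_def by simp
qed

theorem mainTheorem1:
  fixes \<Omega> :: "(real^'n) set"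
    and \<alpha> :: "real^'n \<Rightarrow> real^'n \<Rightarrow> real^'n"
    and \<Theta> :: "real^'n \<Rightarrow> real^'n \<Rightarrow> 'n \<Rightarrow> 'n \<Rightarrow> 'n \<Rightarrow> 'n \<Rightarrow> real"
    and v1 v2 :: "real^'n \<Rightarrow> real^'n"
  defines "\<Omega>\<tau> \<equiv> interaction_region \<Omega> \<alpha>"
  defines "U \<equiv> \<Omega> \<union> \<Omega>\<tau>"
  assumes domain: "open \<Omega>" "connected \<Omega>" "\<Omega> \<noteq> {}"
    and antisym: "\<And>x x'. \<alpha> x x' = - \<alpha> x' x"
    and Theta_sym: "\<And>x x' i j k l. x \<in> U \<Longrightarrow> x' \<in> U \<Longrightarrow>
          \<Theta> x x' i j k l = \<Theta> x x' j i k l \<and>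
          \<Theta> x x' i j k l = \<Theta> x x' i j l k \<and>
          \<Theta> x x' i j k l = \<Theta> x x' k l i j"
    and Theta_swap: "\<And>x x'. x \<in> U \<Longrightarrow> x' \<in> U \<Longrightarrow> \<Theta> x x' = \<Theta> x' x"
    and int12_\<Omega>: "\<And>i. set_integrable (lborel \<Otimes>\<^sub>M lborel) (\<Omega> \<times> U)
          (\<lambda>(x, x'). v1 x $ i * sym_dot \<alpha> (ddot \<Theta> (Dstar v2 \<alpha>)) x x' i)"
    and int21_\<Omega>: "\<And>i. set_integrable (lborel \<Otimes>\<^sub>M lborel) (\<Omega> \<times> U)
          (\<lambda>(x, x'). v2 x $ i * sym_dot \<alpha> (ddot \<Theta> (Dstar v1 \<alpha>)) x x' i)"
    and int12_\<tau>: "\<And>i. set_integrable (lborel \<Otimes>\<^sub>M lborel) (\<Omega>\<tau> \<times> U)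
          (\<lambda>(x, x'). v1 x $ i * sym_dot \<alpha> (ddot \<Theta> (Dstar v2 \<alpha>)) x x' i)"
    and int21_\<tau>: "\<And>i. set_integrable (lborel \<Otimes>\<^sub>M lborel) (\<Omega>\<tau> \<times> U)
          (\<lambda>(x, x'). v2 x $ i * sym_dot \<alpha> (ddot \<Theta> (Dstar v1 \<alpha>)) x x' i)"
  shows "(LINT x:\<Omega>|lborel.
            v1 x \<bullet> Dop U \<alpha> (ddot \<Theta> (Dstar v2 \<alpha>)) x
          - v2 x \<bullet> Dop U \<alpha> (ddot \<Theta> (Dstar v1 \<alpha>)) x)
       = (LINT x:\<Omega>\<tau>|lborel.
            v1 x \<bullet> Nop U \<alpha> (ddot \<Theta> (Dstar v2 \<alpha>)) x
          - v2 x \<bullet> Nop U \<alpha> (ddot \<Theta> (Dstar v1 \<alpha>)) x)"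
proof -
  define P1 where "P1 = ddot \<Theta> (Dstar v1 \<alpha>)"
  define P2 where "P2 = ddot \<Theta> (Dstar v2 \<alpha>)"
  define F12 where "F12 i x y = v1 x $ i * sym_dot \<alpha> P2 x y i" for i x y
  define F21 where "F21 i x y = v2 x $ i * sym_dot \<alpha> P1 x y i" for i x y
  have i12o: "\<And>i. set_integrable (lborel \<Otimes>\<^sub>M lborel) (\<Omega> \<times> U) (\<lambda>(x,y). F12 i x y)"
    unfolding F12_def P2_def using int12_\<Omega> .
  have i21o: "\<And>i. set_integrable (lborel \<Otimes>\<^sub>M lborel) (\<Omega> \<times> U) (\<lambda>(x,y). F21 i x y)"
    unfolding F21_def P1_def using int21_\<Omega> .
  have i12t: "\<And>i. set_integrable (lborel \<Otimes>\<^sub>M lborel) (\<Omega>\<tau> \<times> U) (\<lambda>(x,y). F12 i x y)"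
    unfolding F12_def P2_def using int12_\<tau> .
  have i21t: "\<And>i. set_integrable (lborel \<Otimes>\<^sub>M lborel) (\<Omega>\<tau> \<times> U) (\<lambda>(x,y). F21 i x y)"
    unfolding F21_def P1_def using int21_\<tau> .
  have disj: "\<Omega> \<inter> \<Omega>\<tau> = {}"
    unfolding \<Omega>\<tau>_def interaction_region_def by auto
  have disj2: "(\<Omega> \<times> U) \<inter> (\<Omega>\<tau> \<times> U) = {}" using disj by auto
  have UU: "U \<times> U = (\<Omega> \<times> U) \<union> (\<Omega>\<tau> \<times> U)" unfolding U_def by auto
  have dotD1: "\<And>x. v1 x \<bullet> Dop U \<alpha> P2 x = (\<Sum>i\<in>UNIV. LINT y:U|lborel. F12 i x y)"
    unfolding inner_vec_def Dop_def F12_def by simp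
  have dotD2: "\<And>x. v2 x \<bullet> Dop U \<alpha> P1 x = (\<Sum>i\<in>UNIV. LINT y:U|lborel. F21 i x y)"
    unfolding inner_vec_def Dop_def F21_def by simp
  have dotN1: "\<And>x. v1 x \<bullet> Nop U \<alpha> P2 x = - (\<Sum>i\<in>UNIV. LINT y:U|lborel. F12 i x y)"
    unfolding inner_vec_def Nop_def F12_def by (simp add: sum_negf[symmetric])
  have dotN2: "\<And>x. v2 x \<bullet> Nop U \<alpha> P1 x = - (\<Sum>i\<in>UNIV. LINT y:U|lborel. F21 i x y)"
    unfolding inner_vec_def Nop_def F21_def by (simp add: sum_negf[symmetric])
  define I :: "((real^'n) \<times> (real^'n)) set \<Rightarrow> (real^'n \<Rightarrow> real^'n \<Rightarrow> real) \<Rightarrow> real"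
    where "I A f = set_lebesgue_integral (lborel \<Otimes>\<^sub>M lborel) A (\<lambda>(x,y). f x y)" for A f
  have side: "(LINT x:S|lborel. (\<Sum>i\<in>UNIV. LINT y:U|lborel. F12 i x y) - (\<Sum>i\<in>UNIV. LINT y:U|lborel. F21 i x y))
      = (\<Sum>i\<in>UNIV. I (S \<times> U) (F12 i)) - (\<Sum>i\<in>UNIV. I (S \<times> U) (F21 i))"
    if a: "\<And>i. set_integrable (lborel \<Otimes>\<^sub>M lborel) (S \<times> U) (\<lambda>(x,y). F12 i x y)"
      and b: "\<And>i. set_integrable (lborel \<Otimes>\<^sub>M lborel) (S \<times> U) (\<lambda>(x,y). F21 i x y)" for S
  proof -
    have s1: "set_integrable lborel S (\<lambda>x. \<Sum>i\<in>UNIV. LINT y:U|lborel. F12 i x y)"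
      by (rule set_sum_int(1)) (auto intro: fub(1)[OF a])
    have s2: "set_integrable lborel S (\<lambda>x. \<Sum>i\<in>UNIV. LINT y:U|lborel. F21 i x y)"
      by (rule set_sum_int(1)) (auto intro: fub(1)[OF b])
    show ?thesis
      unfolding set_integral_diff(2)[OF s1 s2]
      unfolding set_sum_int(2)[OF finite_class.finite_UNIV fub(1)[OF a]] set_sum_int(2)[OF finite_class.finite_UNIV fub(1)[OF b]]
      unfolding fub(2)[OF a] fub(2)[OF b] I_def ..
  qed
  have L: "(LINT x:\<Omega>|lborel. v1 x \<bullet> Dop U \<alpha> P2 x - v2 x \<bullet> Dop U \<alpha> P1 x)
      = (\<Sum>i\<in>UNIV. I (\<Omega> \<times> U) (F12 i)) - (\<Sum>i\<in>UNIV. I (\<Omega> \<times> U) (F21 i))"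
    unfolding dotD1 dotD2 by (rule side[OF i12o i21o])
  have R: "(LINT x:\<Omega>\<tau>|lborel. v1 x \<bullet> Nop U \<alpha> P2 x - v2 x \<bullet> Nop U \<alpha> P1 x)
      = - ((\<Sum>i\<in>UNIV. I (\<Omega>\<tau> \<times> U) (F12 i)) - (\<Sum>i\<in>UNIV. I (\<Omega>\<tau> \<times> U) (F21 i)))"
  proof -
    have "(LINT x:\<Omega>\<tau>|lborel. v1 x \<bullet> Nop U \<alpha> P2 x - v2 x \<bullet> Nop U \<alpha> P1 x)
       = (LINT x:\<Omega>\<tau>|lborel. - ((\<Sum>i\<in>UNIV. LINT y:U|lborel. F12 i x y) - (\<Sum>i\<in>UNIV. LINT y:U|lborel. F21 i x y)))"
      unfolding dotN1 dotN2 by simp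
    also have "\<dots> = - (LINT x:\<Omega>\<tau>|lborel. (\<Sum>i\<in>UNIV. LINT y:U|lborel. F12 i x y) - (\<Sum>i\<in>UNIV. LINT y:U|lborel. F21 i x y))"
      unfolding set_lebesgue_integral_def by (subst integral_minus[symmetric]) (simp add: algebra_simps)
    also have "\<dots> = - ((\<Sum>i\<in>UNIV. I (\<Omega>\<tau> \<times> U) (F12 i)) - (\<Sum>i\<in>UNIV. I (\<Omega>\<tau> \<times> U) (F21 i)))"
      by (simp only: side[OF i12t i21t])
    finally show ?thesis .
  qed
  have splitI: "I (U \<times> U) (F i) = I (\<Omega> \<times> U) (F i) + I (\<Omega>\<tau> \<times> U) (F i)"
    if "set_integrable (lborel \<Otimes>\<^sub>M lborel) (\<Omega> \<times> U) (\<lambda>(x,y). F i x y)"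
       "set_integrable (lborel \<Otimes>\<^sub>M lborel) (\<Omega>\<tau> \<times> U) (\<lambda>(x,y). F i x y)" for F :: "'n \<Rightarrow> real^'n \<Rightarrow> real^'n \<Rightarrow> real" and i
    unfolding I_def UU by (rule set_integral_Un[OF disj2 that])
  have uu: "set_integrable (lborel \<Otimes>\<^sub>M lborel) (U \<times> U) (\<lambda>(x,y). F i x y)"
    if "set_integrable (lborel \<Otimes>\<^sub>M lborel) (\<Omega> \<times> U) (\<lambda>(x,y). F i x y)"
       "set_integrable (lborel \<Otimes>\<^sub>M lborel) (\<Omega>\<tau> \<times> U) (\<lambda>(x,y). F i x y)" for F :: "'n \<Rightarrow> real^'n \<Rightarrow> real^'n \<Rightarrow> real" and i
    unfolding UU by (rule un_int[OF disj2 that])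
  have u12: "\<And>i. set_integrable (lborel \<Otimes>\<^sub>M lborel) (U \<times> U) (\<lambda>(x,y). F12 i x y)"
    using uu[OF i12o i12t] .
  have u21: "\<And>i. set_integrable (lborel \<Otimes>\<^sub>M lborel) (U \<times> U) (\<lambda>(x,y). F21 i x y)"
    using uu[OF i21o i21t] .
  have s1: "set_integrable (lborel \<Otimes>\<^sub>M lborel) (U \<times> U) (\<lambda>z. \<Sum>i\<in>UNIV. (\<lambda>(x,y). F12 i x y) z)"
    by (rule set_sum_int(1)) (auto intro: u12)
  have s2: "set_integrable (lborel \<Otimes>\<^sub>M lborel) (U \<times> U) (\<lambda>z. \<Sum>i\<in>UNIV. (\<lambda>(x,y). F21 i x y) z)"
    by (rule set_sum_int(1)) (auto intro: u21)
  have zero: "(\<Sum>i\<in>UNIV. I (U \<times> U) (F12 i)) - (\<Sum>i\<in>UNIV. I (U \<times> U) (F21 i)) = 0"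
  proof -
    have "(\<Sum>i\<in>UNIV. I (U \<times> U) (F12 i)) - (\<Sum>i\<in>UNIV. I (U \<times> U) (F21 i))
       = set_lebesgue_integral (lborel \<Otimes>\<^sub>M lborel) (U \<times> U)
           (\<lambda>z. (\<Sum>i\<in>UNIV. (\<lambda>(x,y). F12 i x y) z) - (\<Sum>i\<in>UNIV. (\<lambda>(x,y). F21 i x y) z))"
      unfolding set_integral_diff(2)[OF s1 s2] I_def
      unfolding set_sum_int(2)[OF finite_class.finite_UNIV u12] set_sum_int(2)[OF finite_class.finite_UNIV u21] ..
    also have "\<dots> = 0"
    proof (rule zero_swap)
      show "set_integrable (lborel \<Otimes>\<^sub>M lborel) (U \<times> U)
           (\<lambda>z. (\<Sum>i\<in>UNIV. (\<lambda>(x,y). F12 i x y) z) - (\<Sum>i\<in>UNIV. (\<lambda>(x,y). F21 i x y) z))"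
        by (rule set_integral_diff(1)[OF s1 s2])
      fix x y assume xy: "x \<in> U" "y \<in> U"
      have t2: "\<And>i j k l. \<Theta> x y i j k l = \<Theta> x y k l i j"
        using Theta_sym[OF xy] by blast
      have "(\<Sum>i\<in>UNIV. F12 i x y - F21 i x y) + (\<Sum>i\<in>UNIV. F12 i y x - F21 i y x) = 0"
        unfolding F12_def F21_def P1_def P2_def
        by (rule pointwise[where \<alpha>=\<alpha> and \<Theta>=\<Theta> and x=x and y=y, OF antisym antisym Theta_swap[OF xy(2,1)] t2])
      then show "(\<Sum>i\<in>UNIV. (\<lambda>(x,y). F12 i x y) (x,y)) - (\<Sum>i\<in>UNIV. (\<lambda>(x,y). F21 i x y) (x,y))
         + ((\<Sum>i\<in>UNIV. (\<lambda>(x,y). F12 i x y) (y,x)) - (\<Sum>i\<in>UNIV. (\<lambda>(x,y). F21 i x y) (y,x))) = 0"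
        by (simp add: sum_subtractf)
    qed
    finally show ?thesis .
  qed
  have "(LINT x:\<Omega>|lborel. v1 x \<bullet> Dop U \<alpha> P2 x - v2 x \<bullet> Dop U \<alpha> P1 x)
      = (LINT x:\<Omega>\<tau>|lborel. v1 x \<bullet> Nop U \<alpha> P2 x - v2 x \<bullet> Nop U \<alpha> P1 x)"
  proof -
    have z: "(\<Sum>i\<in>UNIV. I (\<Omega> \<times> U) (F12 i)) + (\<Sum>i\<in>UNIV. I (\<Omega>\<tau> \<times> U) (F12 i))
       - ((\<Sum>i\<in>UNIV. I (\<Omega> \<times> U) (F21 i)) + (\<Sum>i\<in>UNIV. I (\<Omega>\<tau> \<times> U) (F21 i))) = 0"
    proof -
      have a: "\<And>i. I (U \<times> U) (F12 i) = I (\<Omega> \<times> U) (F12 i) + I (\<Omega>\<tau> \<times> U) (F12 i)"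
        by (rule splitI[OF i12o i12t])
      have b: "\<And>i. I (U \<times> U) (F21 i) = I (\<Omega> \<times> U) (F21 i) + I (\<Omega>\<tau> \<times> U) (F21 i)"
        by (rule splitI[OF i21o i21t])
      show ?thesis using zero unfolding a b sum.distrib .
    qed
    show ?thesis unfolding L R using z by linarith
  qed
  then show ?thesis unfolding P1_def P2_def .
qed

end
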